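(* Let $p=p(n)\ge n^{-1/2}$, $G=G_{n,p}$, let $X$ be the number of edges of $G$ that lie in no triangle of $G$, and let $\mu(p)=\mathbb{E}X=\binom n2 p(1-p^2)^{n-2}$. If $\mu(p)\to\infty$ as $n\to\infty$, then $\Pr(X=0)\to 0$. In particular this holds if $p<\sqrt{(3/2-\varepsilon)\log n/n}$ for some fixed constant $\varepsilon>0$.
   Context: $G_{n,p}$ is the binomial random graph on $[n]$, each edge present independently with probability $p$; $\log$ is the natural logarithm. *)

theory Defs
  imports "HOL-Analysis.Analysis" "HOL-Probability.Probability"
begin

text \<open>Potential edges of a graph on vertex set [n] = {1..n}: pairs (i,j) with 1 <= i < j <= n.
  A graph is encoded by its edge indicator on these pairs.\<close>
definition pot_edges :: "nat \<Rightarrow> (nat \<times> nat) set" where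
  "pot_edges n = {(i, j). 1 \<le> i \<and> i < j \<and> j \<le> n}"

definition G_np :: "nat \<Rightarrow> real \<Rightarrow> (nat \<times> nat \<Rightarrow> bool) pmf" where
  "G_np n p = Pi_pmf (pot_edges n) False (\<lambda>_. bernoulli_pmf p)"

definition adj :: "(nat \<times> nat \<Rightarrow> bool) \<Rightarrow> nat \<Rightarrow> nat \<Rightarrow> bool" where
  "adj G u v = (if u < v then G (u, v) else if v < u then G (v, u) else False)"

definition triangle_free_edges :: "nat \<Rightarrow> (nat \<times> nat \<Rightarrow> bool) \<Rightarrow> nat" where
  "triangle_free_edges n G =
     card {e \<in> pot_edges n. G e \<and>
       \<not> (\<exists>k\<in>{1..n}. adj G (fst e) k \<and> adj G (snd e) k)}"

end

theory Submission
  imports Defs "HOL-Real_Asymp.Real_Asymp"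
begin


lemma nn_restrict_Pi:
  fixes f :: "('a \<Rightarrow> 'b) \<Rightarrow> ennreal"
  assumes "finite I" "A \<subseteq> I" "\<And>g h. (\<forall>x\<in>A. g x = h x) \<Longrightarrow> f g = f h"
  shows "(\<integral>\<^sup>+G. f G \<partial>Pi_pmf A dflt P) = (\<integral>\<^sup>+G. f G \<partial>Pi_pmf I dflt P)"
proof -
  have "(\<integral>\<^sup>+G. f G \<partial>Pi_pmf A dflt P) = (\<integral>\<^sup>+G. f (\<lambda>x. if x \<in> A then G x else dflt) \<partial>Pi_pmf I dflt P)"
    by (subst Pi_pmf_subset[OF assms(1,2)]) simp
  also have "\<dots> = (\<integral>\<^sup>+G. f G \<partial>Pi_pmf I dflt P)"
    by (intro nn_integral_cong assms(3)) auto
  finally show ?thesis .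
qed

lemma nn_groups:
  fixes f :: "'k \<Rightarrow> ('a \<Rightarrow> 'b) \<Rightarrow> ennreal"
  assumes "finite K" "finite I" "\<And>k. k \<in> K \<Longrightarrow> J k \<subseteq> I" "disjoint_family_on J K"
    "\<And>k g h. k \<in> K \<Longrightarrow> (\<forall>x\<in>J k. g x = h x) \<Longrightarrow> f k g = f k h"
  shows "(\<integral>\<^sup>+G. (\<Prod>k\<in>K. f k G) \<partial>Pi_pmf I dflt P) = (\<Prod>k\<in>K. \<integral>\<^sup>+G. f k G \<partial>Pi_pmf I dflt P)"
  using assms
proof (induction K arbitrary: I rule: finite_induct)
  case empty
  then show ?case by simp
next
  case (insert k K)
  define A where "A = J k"
  define B where "B = I - A"
  have AI: "A \<subseteq> I" using insert.prems(2) by (auto simp: A_def)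
  have finA: "finite A" using AI insert.prems(1) finite_subset by blast
  have finB: "finite B" using insert.prems(1) by (auto simp: B_def)
  have IAB: "I = A \<union> B" "A \<inter> B = {}" using AI by (auto simp: B_def)
  have JB: "J j \<subseteq> B" if "j \<in> K" for j
  proof -
    have "j \<noteq> k" using that insert.hyps by auto
    then have "J j \<inter> J k = {}" using insert.prems(3) that unfolding disjoint_family_on_def by auto
    then show ?thesis using insert.prems(2)[of j] that by (auto simp: B_def A_def)
  qed
  have dK: "disjoint_family_on J K" using insert.prems(3) by (auto simp: disjoint_family_on_def)
  let ?m = "\<lambda>(g,h) x. if x \<in> A then g x else h x"
  have "(\<integral>\<^sup>+G. (\<Prod>j\<in>insert k K. f j G) \<partial>Pi_pmf I dflt P)
      = (\<integral>\<^sup>+G. f k G * (\<Prod>j\<in>K. f j G) \<partial>Pi_pmf I dflt P)"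
    using insert.hyps by simp
  also have "\<dots> = (\<integral>\<^sup>+gh. f k (?m gh) * (\<Prod>j\<in>K. f j (?m gh)) \<partial>pair_pmf (Pi_pmf A dflt P) (Pi_pmf B dflt P))"
    by (subst IAB(1), subst Pi_pmf_union[OF finA finB IAB(2)]) simp
  also have "\<dots> = (\<integral>\<^sup>+gh. f k (fst gh) * (\<Prod>j\<in>K. f j (snd gh)) \<partial>pair_pmf (Pi_pmf A dflt P) (Pi_pmf B dflt P))"
  proof (intro nn_integral_cong)
    fix gh :: "('a \<Rightarrow> 'b) \<times> ('a \<Rightarrow> 'b)"
    obtain g h where gh: "gh = (g,h)" by fastforce
    have 1: "f k (?m gh) = f k g"
      by (rule insert.prems(4)) (auto simp: gh A_def)
    have 2: "f j (?m gh) = f j h" if "j \<in> K" for j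
      by (rule insert.prems(4)) (use that JB[OF that] in \<open>auto simp: gh B_def\<close>)
    show "f k (?m gh) * (\<Prod>j\<in>K. f j (?m gh)) = f k (fst gh) * (\<Prod>j\<in>K. f j (snd gh))"
      using 1 2 by (simp add: gh)
  qed
  also have "\<dots> = (\<integral>\<^sup>+g. f k g \<partial>Pi_pmf A dflt P) * (\<integral>\<^sup>+h. (\<Prod>j\<in>K. f j h) \<partial>Pi_pmf B dflt P)"
    by (simp add: nn_integral_pair_pmf' nn_integral_cmult nn_integral_multc)
  also have "(\<integral>\<^sup>+h. (\<Prod>j\<in>K. f j h) \<partial>Pi_pmf B dflt P) = (\<Prod>j\<in>K. \<integral>\<^sup>+h. f j h \<partial>Pi_pmf B dflt P)"
    by (rule insert.IH[OF finB JB dK]) (use insert.prems(4) in auto)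
  also have "\<dots> = (\<Prod>j\<in>K. \<integral>\<^sup>+h. f j h \<partial>Pi_pmf I dflt P)"
  proof (intro prod.cong refl nn_restrict_Pi insert.prems(1))
    fix j and g h :: "'a \<Rightarrow> 'b" assume j: "j \<in> K" and gh: "\<forall>x\<in>B. g x = h x"
    show "f j g = f j h" using insert.prems(4)[of j g h] JB[OF j] gh j by auto
  qed (auto simp: B_def)
  also have "(\<integral>\<^sup>+g. f k g \<partial>Pi_pmf A dflt P) = (\<integral>\<^sup>+g. f k g \<partial>Pi_pmf I dflt P)"
    by (intro nn_restrict_Pi insert.prems(1) AI) (use insert.prems(4) A_def in auto)
  finally show ?case using insert.hyps by simp
qed

lemma prod_of_bool_all:
  "finite K \<Longrightarrow> (\<Prod>k\<in>K. (of_bool (C k) :: 'a::comm_semiring_1)) = of_bool (\<forall>k\<in>K. C k)"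
  by (induction K rule: finite_induct) auto

lemma enn2real_prod': "enn2real (\<Prod>k\<in>K. f k) = (\<Prod>k\<in>K. enn2real (f k))"
  by (induction K rule: infinite_finite_induct) (auto simp: enn2real_mult)

lemma int_of_bool: "integrable (measure_pmf M) (\<lambda>x. of_bool (Q x) :: real)"
  by (intro measure_pmf.integrable_const_bound[where B=1]) auto

lemma exp_of_bool_enn:
  "measure_pmf.expectation M (\<lambda>x. of_bool (Q x) :: real) = enn2real (\<integral>\<^sup>+x. of_bool (Q x) \<partial>M)"
  by (subst integral_eq_nn_integral) (auto simp: of_bool_def intro!: arg_cong[where f=enn2real] nn_integral_cong)

lemma real_groups:
  fixes C :: "'k \<Rightarrow> ('a \<Rightarrow> 'b) \<Rightarrow> bool"
  assumes "finite K" "finite I" "\<And>k. k \<in> K \<Longrightarrow> J k \<subseteq> I" "disjoint_family_on J K"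
    "\<And>k g h. k \<in> K \<Longrightarrow> (\<forall>x\<in>J k. g x = h x) \<Longrightarrow> C k g = C k h"
  shows "measure_pmf.expectation (Pi_pmf I dflt P) (\<lambda>G. of_bool (\<forall>k\<in>K. C k G) :: real)
       = (\<Prod>k\<in>K. measure_pmf.expectation (Pi_pmf I dflt P) (\<lambda>G. of_bool (C k G)))"
proof -
  have "(\<integral>\<^sup>+G. (\<Prod>k\<in>K. (of_bool (C k G) :: ennreal)) \<partial>Pi_pmf I dflt P)
      = (\<Prod>k\<in>K. \<integral>\<^sup>+G. of_bool (C k G) \<partial>Pi_pmf I dflt P)"
  proof (rule nn_groups[OF assms(1-4)])
    fix k and g h :: "'a \<Rightarrow> 'b" assume "k \<in> K" "\<forall>x\<in>J k. g x = h x"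
    then have "C k g = C k h" by (rule assms(5))
    then show "(of_bool (C k g) :: ennreal) = of_bool (C k h)" by simp
  qed
  then have "(\<integral>\<^sup>+G. of_bool (\<forall>k\<in>K. C k G) \<partial>Pi_pmf I dflt P)
      = (\<Prod>k\<in>K. \<integral>\<^sup>+G. of_bool (C k G) \<partial>Pi_pmf I dflt P)"
    by (simp add: prod_of_bool_all[OF assms(1)])
  then show ?thesis
    by (simp add: exp_of_bool_enn enn2real_prod')
qed

lemma exp_coord:
  fixes h :: "bool \<Rightarrow> real"
  assumes "finite I" "x \<in> I"
  shows "measure_pmf.expectation (Pi_pmf I False P) (\<lambda>G. h (G x)) = measure_pmf.expectation (P x) h"
proof -
  have "measure_pmf.expectation (Pi_pmf I False P) (\<lambda>G. h (G x))
     = measure_pmf.expectation (map_pmf (\<lambda>G. G x) (Pi_pmf I False P)) h" by simp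
  also have "map_pmf (\<lambda>G. G x) (Pi_pmf I False P) = P x"
    by (simp add: Pi_pmf_component[OF assms(1)] assms(2))
  finally show ?thesis .
qed

locale gnp =
  fixes I :: "'a set" and p :: real
  assumes finI: "finite I" and p0: "0 \<le> p" and p1: "p \<le> 1"
begin

abbreviation "M \<equiv> Pi_pmf I False (\<lambda>_. bernoulli_pmf p)"
abbreviation "E (f :: ('a \<Rightarrow> bool) \<Rightarrow> real) \<equiv> measure_pmf.expectation M f"

lemma E1: "x \<in> I \<Longrightarrow> E (\<lambda>G. of_bool (G x)) = p"
  using exp_coord[OF finI, where x=x and h=of_bool] p0 p1 by simp

lemma Emono: assumes "S \<subseteq> I" shows "E (\<lambda>G. \<Prod>s\<in>S. of_bool (G s)) = p ^ card S"
proof -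
  have fS: "finite S" using assms finI finite_subset by blast
  have "E (\<lambda>G. of_bool (\<forall>s\<in>S. G s)) = (\<Prod>s\<in>S. E (\<lambda>G. of_bool (G s)))"
    by (rule real_groups[OF fS finI, where J="\<lambda>s. {s}"]) (use assms in \<open>auto simp: disjoint_family_on_def\<close>)
  also have "\<dots> = (\<Prod>s\<in>S. p)" by (rule prod.cong) (use E1 assms in auto)
  also have "\<dots> = p ^ card S" by simp
  finally show ?thesis by (simp add: prod_of_bool_all[OF fS])
qed

lemma intg: "integrable M (f :: _ \<Rightarrow> real)"
proof -
  have "finite (PiE_dflt I False (\<lambda>_. UNIV :: bool set))" using finI by auto
  moreover have "set_pmf M \<subseteq> PiE_dflt I False (\<lambda>_. UNIV :: bool set)"
    using set_Pi_pmf_subset[OF finI, of False "\<lambda>_. bernoulli_pmf p"] by (auto simp: PiE_dflt_def)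
  ultimately show ?thesis by (intro integrable_measure_pmf_finite) (rule finite_subset)
qed

lemma E2: assumes "x \<in> I" "y \<in> I" "x \<noteq> y"
  shows "E (\<lambda>G. of_bool (\<not> (G x \<and> G y))) = 1 - p^2"
proof -
  have "E (\<lambda>G. of_bool (\<not> (G x \<and> G y))) = E (\<lambda>G. 1 - (\<Prod>s\<in>{x,y}. of_bool (G s)))"
    using assms by (intro Bochner_Integration.integral_cong) auto
  also have "\<dots> = 1 - E (\<lambda>G. \<Prod>s\<in>{x,y}. of_bool (G s))"
    by (subst Bochner_Integration.integral_diff) (auto intro: intg)
  also have "\<dots> = 1 - p^2" using Emono[of "{x,y}"] assms by (simp add: power2_eq_square power3_eq_cube)
  finally show ?thesis .
qed

lemma E3: assumes "x \<in> I" "y \<in> I" "z \<in> I" "x \<noteq> y" "x \<noteq> z" "y \<noteq> z"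
  shows "E (\<lambda>G. of_bool (\<not> (G x \<and> G y) \<and> \<not> (G x \<and> G z))) = 1 - 2*p^2 + p^3"
proof -
  have "E (\<lambda>G. of_bool (\<not> (G x \<and> G y) \<and> \<not> (G x \<and> G z)))
     = E (\<lambda>G. 1 - (\<Prod>s\<in>{x,y}. of_bool (G s)) - (\<Prod>s\<in>{x,z}. of_bool (G s)) + (\<Prod>s\<in>{x,y,z}. of_bool (G s)))"
    using assms by (intro Bochner_Integration.integral_cong) auto
  also have "\<dots> = 1 - E (\<lambda>G. \<Prod>s\<in>{x,y}. of_bool (G s)) - E (\<lambda>G. \<Prod>s\<in>{x,z}. of_bool (G s))
        + E (\<lambda>G. \<Prod>s\<in>{x,y,z}. of_bool (G s))"
    by (simp add: Bochner_Integration.integral_diff Bochner_Integration.integral_add intg)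
  also have "\<dots> = 1 - 2*p^2 + p^3" using Emono[of "{x,y}"] Emono[of "{x,z}"] Emono[of "{x,y,z}"] assms by (simp add: power2_eq_square power3_eq_cube)
  finally show ?thesis .
qed

end


definition ed :: "nat \<Rightarrow> nat \<Rightarrow> nat \<times> nat" where "ed u v = (min u v, max u v)"

lemma ed_eq_iff: "ed u v = ed u' v' \<longleftrightarrow> (u = u' \<and> v = v') \<or> (u = v' \<and> v = u')"
  by (auto simp: ed_def min_def max_def)

lemma ed_in: "u \<in> {1..n} \<Longrightarrow> v \<in> {1..n} \<Longrightarrow> u \<noteq> v \<Longrightarrow> ed u v \<in> pot_edges n"
  by (auto simp: ed_def pot_edges_def min_def max_def)

lemma adj_ed: "u \<noteq> v \<Longrightarrow> adj G u v = G (ed u v)"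
  by (auto simp: adj_def ed_def min_def max_def)

lemma adj_self: "\<not> adj G u u"
  by (simp add: adj_def)

lemma finite_pot_edges: "finite (pot_edges n)"
  by (rule finite_subset[of _ "{1..n} \<times> {1..n}"]) (auto simp: pot_edges_def)

definition tfe :: "nat \<Rightarrow> (nat \<times> nat \<Rightarrow> bool) \<Rightarrow> nat \<Rightarrow> nat \<Rightarrow> bool" where
  "tfe n G a b \<longleftrightarrow> G (ed a b) \<and> \<not> (\<exists>k\<in>{1..n}. adj G a k \<and> adj G b k)"

locale gr =
  fixes n :: nat and p :: real
  assumes p0': "0 \<le> p" and p1': "p \<le> 1"
begin

sublocale gnp "pot_edges n" p
  by unfold_locales (auto simp: finite_pot_edges p0' p1')

lemma L1:
  assumes ab: "a \<in> {1..n}" "b \<in> {1..n}" "a \<noteq> b"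
  shows "E (\<lambda>G. of_bool (tfe n G a b)) = p * (1 - p^2) ^ (n - 2)"
proof -
  define R where "R = {1..n} - {a, b}"
  define K where "K = insert 0 R"
  define J where "J k = (if k = 0 then {ed a b} else {ed a k, ed b k})" for k
  define C where "C k G = (if k = 0 then G (ed a b) else \<not> (G (ed a k) \<and> G (ed b k)))" for k and G :: "nat \<times> nat \<Rightarrow> bool"
  have fR: "finite R" by (simp add: R_def)
  have 0: "0 \<notin> R" by (simp add: R_def)
  have cR: "card R = n - 2" using ab by (simp add: R_def card_Diff_subset)
  have eq: "tfe n G a b \<longleftrightarrow> (\<forall>k\<in>K. C k G)" for G
  proof -
    have "(\<exists>k\<in>{1..n}. adj G a k \<and> adj G b k) \<longleftrightarrow> (\<exists>k\<in>R. G (ed a k) \<and> G (ed b k))"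
    proof -
      have h1: "adj G a k \<and> adj G b k \<longleftrightarrow> G (ed a k) \<and> G (ed b k)" if "k \<noteq> a" "k \<noteq> b" for k
        using that adj_ed by metis
      have h2: "\<not> (adj G a k \<and> adj G b k)" if "k = a \<or> k = b" for k
        using that adj_self by metis
      show ?thesis using h1 h2 unfolding R_def by blast
    qed
    then show ?thesis using 0 by (auto simp: tfe_def K_def C_def)
  qed
  have "E (\<lambda>G. of_bool (tfe n G a b)) = E (\<lambda>G. of_bool (\<forall>k\<in>K. C k G))"
    by (simp add: eq)
  also have "\<dots> = (\<Prod>k\<in>K. E (\<lambda>G. of_bool (C k G)))"
  proof (rule real_groups[where J=J])
    show "finite K" using fR by (simp add: K_def)
    show "finite (pot_edges n)" by (rule finite_pot_edges)
    show "J k \<subseteq> pot_edges n" if "k \<in> K" for k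
      using that ab by (auto simp: K_def R_def J_def intro!: ed_in)
    show "disjoint_family_on J K"
      using ab 0 by (auto simp: disjoint_family_on_def K_def R_def J_def ed_eq_iff)
    show "C k g = C k h" if "k \<in> K" "\<forall>x\<in>J k. g x = h x" for k and g h :: "nat \<times> nat \<Rightarrow> bool"
      using that by (auto simp: C_def J_def)
  qed
  also have "\<dots> = E (\<lambda>G. of_bool (C 0 G)) * (\<Prod>k\<in>R. E (\<lambda>G. of_bool (C k G)))"
    using fR 0 by (simp add: K_def)
  also have "E (\<lambda>G. of_bool (C 0 G)) = p"
    using ab by (simp add: C_def E1 ed_in)
  also have "(\<Prod>k\<in>R. E (\<lambda>G. of_bool (C k G))) = (\<Prod>k\<in>R. 1 - p^2)"
  proof (rule prod.cong)
    fix k assume k: "k \<in> R"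
    then have "k \<noteq> 0" using 0 by metis
    then have "E (\<lambda>G. of_bool (C k G)) = E (\<lambda>G. of_bool (\<not> (G (ed a k) \<and> G (ed b k))))"
      by (simp add: C_def)
    also have "\<dots> = 1 - p^2"
      using k ab by (intro E2) (auto simp: R_def ed_eq_iff intro!: ed_in)
    finally show "E (\<lambda>G. of_bool (C k G)) = 1 - p^2" .
  qed simp
  finally show ?thesis using cR by simp
qed


lemma tfe_imp:
  assumes "tfe n G a b" "k \<in> {1..n}" "k \<noteq> a" "k \<noteq> b"
  shows "\<not> (G (ed a k) \<and> G (ed b k))"
  using assms adj_ed[of a k G] adj_ed[of b k G] by (auto simp: tfe_def)

lemma tfe_edge: "tfe n G a b \<Longrightarrow> G (ed a b)" by (simp add: tfe_def)

lemma prod_K2: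
  fixes f :: "nat \<times> nat \<Rightarrow> real"
  assumes "finite R"
  shows "(\<Prod>i\<in>{(0,0),(0,1)} \<union> Pair 1 ` R \<union> Pair 2 ` R. f i)
       = f (0,0) * f (0,1) * (\<Prod>k\<in>R. f (1,k)) * (\<Prod>k\<in>R. f (2,k))"
proof -
  have "(\<Prod>i\<in>{(0,0),(0,1)} \<union> Pair 1 ` R \<union> Pair 2 ` R. f i)
     = (\<Prod>i\<in>{(0,0),(0,1)} \<union> Pair 1 ` R. f i) * (\<Prod>i\<in>Pair 2 ` R. f i)"
    using assms by (intro prod.union_disjoint) auto
  also have "(\<Prod>i\<in>{(0,0),(0,1)} \<union> Pair 1 ` R. f i) = (\<Prod>i\<in>{(0,0),(0,1)}. f i) * (\<Prod>i\<in>Pair 1 ` R. f i)"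
    using assms by (intro prod.union_disjoint) auto
  finally show ?thesis using assms by (simp add: prod.reindex inj_on_def)
qed

lemma prod_K1:
  fixes f :: "nat \<times> nat \<Rightarrow> real"
  assumes "finite R"
  shows "(\<Prod>i\<in>{(0,0),(0,1)} \<union> Pair 1 ` R. f i) = f (0,0) * f (0,1) * (\<Prod>k\<in>R. f (1,k))"
proof -
  have "(\<Prod>i\<in>{(0,0),(0,1)} \<union> Pair 1 ` R. f i) = (\<Prod>i\<in>{(0,0),(0,1)}. f i) * (\<Prod>i\<in>Pair 1 ` R. f i)"
    using assms by (intro prod.union_disjoint) auto
  then show ?thesis using assms by (simp add: prod.reindex inj_on_def)
qed

lemma L2:
  assumes V: "a \<in> {1..n}" "b \<in> {1..n}" "c \<in> {1..n}" "d \<in> {1..n}"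
    and D: "a \<noteq> b" "a \<noteq> c" "a \<noteq> d" "b \<noteq> c" "b \<noteq> d" "c \<noteq> d"
  shows "E (\<lambda>G. of_bool (tfe n G a b \<and> tfe n G c d)) \<le> p^2 * (1 - p^2) ^ (2 * (n - 4))"
proof -
  define R where "R = {1..n} - {a, b, c, d}"
  define K :: "(nat \<times> nat) set" where "K = {(0,0),(0,1)} \<union> Pair 1 ` R \<union> Pair 2 ` R"
  define J where "J ik = (case ik of (i, k) \<Rightarrow> if i = 0 then (if k = 0 then {ed a b} else {ed c d})
      else if i = 1 then {ed a k, ed b k} else {ed c k, ed d k})" for ik :: "nat \<times> nat"
  define C where "C ik G = (case ik of (i, k) \<Rightarrow> if i = 0 then (if k = 0 then G (ed a b) else G (ed c d))
      else if i = 1 then \<not> (G (ed a k) \<and> G (ed b k)) else \<not> (G (ed c k) \<and> G (ed d k)))"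
    for ik :: "nat \<times> nat" and G :: "nat \<times> nat \<Rightarrow> bool"
  have fR: "finite R" by (simp add: R_def)
  have 0: "0 \<notin> R" by (simp add: R_def)
  have cR: "card R = n - 4" using V D by (simp add: R_def card_Diff_subset)
  have imp: "\<forall>ik\<in>K. C ik G" if "tfe n G a b \<and> tfe n G c d" for G
    using that tfe_imp[of G a b] tfe_imp[of G c d] tfe_edge[of G]
    by (auto simp: K_def C_def R_def)
  have "E (\<lambda>G. of_bool (tfe n G a b \<and> tfe n G c d)) \<le> E (\<lambda>G. of_bool (\<forall>ik\<in>K. C ik G))"
    by (intro integral_mono intg) (use imp in auto)
  also have "\<dots> = (\<Prod>ik\<in>K. E (\<lambda>G. of_bool (C ik G)))"
  proof (rule real_groups[where J=J])
    show "finite K" using fR by (simp add: K_def)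
    show "finite (pot_edges n)" by (rule finite_pot_edges)
    show "J k \<subseteq> pot_edges n" if "k \<in> K" for k
      using that V D by (auto simp: K_def R_def J_def intro!: ed_in)
    show "disjoint_family_on J K"
      using V D 0 by (auto simp: disjoint_family_on_def K_def R_def J_def ed_eq_iff)
    show "C k g = C k h" if "k \<in> K" "\<forall>x\<in>J k. g x = h x" for k and g h :: "nat \<times> nat \<Rightarrow> bool"
      using that by (auto simp: C_def J_def split: prod.splits)
  qed
  also have "\<dots> = p * p * (\<Prod>k\<in>R. 1 - p^2) * (\<Prod>k\<in>R. 1 - p^2)"
    unfolding K_def prod_K2[OF fR]
  proof (intro arg_cong2[where f="(*)"] arg_cong2[where f="(*)"] prod.cong refl)
    show "E (\<lambda>G. of_bool (C (0, 0) G)) = p" using V D by (simp add: C_def E1 ed_in)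
    show "E (\<lambda>G. of_bool (C (0, 1) G)) = p" using V D by (simp add: C_def E1 ed_in)
    show "E (\<lambda>G. of_bool (C (1, k) G)) = 1 - p^2" if "k \<in> R" for k
    proof -
      have "(\<lambda>G. of_bool (C (1,k) G)::real) = (\<lambda>G. of_bool (\<not> (G (ed a k) \<and> G (ed b k))))" by (simp add: C_def)
      moreover have "E (\<lambda>G. of_bool (\<not> (G (ed a k) \<and> G (ed b k)))) = 1 - p^2"
        using that V D by (intro E2) (auto simp: R_def ed_eq_iff intro!: ed_in)
      ultimately show ?thesis by simp
    qed
    show "E (\<lambda>G. of_bool (C (2, k) G)) = 1 - p^2" if "k \<in> R" for k
    proof -
      have "(\<lambda>G. of_bool (C (2,k) G)::real) = (\<lambda>G. of_bool (\<not> (G (ed c k) \<and> G (ed d k))))" by (simp add: C_def)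
      moreover have "E (\<lambda>G. of_bool (\<not> (G (ed c k) \<and> G (ed d k)))) = 1 - p^2"
        using that V D by (intro E2) (auto simp: R_def ed_eq_iff intro!: ed_in)
      ultimately show ?thesis by simp
    qed
  qed
  also have "\<dots> = p^2 * (1 - p^2) ^ (2 * (n - 4))"
    using cR by (simp add: power2_eq_square power_add mult_2 mult_ac)
  finally show ?thesis .
qed

lemma L3:
  assumes V: "v \<in> {1..n}" "u \<in> {1..n}" "w \<in> {1..n}"
    and D: "v \<noteq> u" "v \<noteq> w" "u \<noteq> w"
  shows "E (\<lambda>G. of_bool (tfe n G v u \<and> tfe n G v w)) \<le> p^2 * (1 - 2*p^2 + p^3) ^ (n - 3)"
proof -
  define R where "R = {1..n} - {v, u, w}"
  define K :: "(nat \<times> nat) set" where "K = {(0,0),(0,1)} \<union> Pair 1 ` R"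
  define J where "J ik = (case ik of (i, k) \<Rightarrow> if i = 0 then (if k = 0 then {ed v u} else {ed v w})
      else {ed v k, ed u k, ed w k})" for ik :: "nat \<times> nat"
  define C where "C ik G = (case ik of (i, k) \<Rightarrow> if i = 0 then (if k = 0 then G (ed v u) else G (ed v w))
      else \<not> (G (ed v k) \<and> G (ed u k)) \<and> \<not> (G (ed v k) \<and> G (ed w k)))"
    for ik :: "nat \<times> nat" and G :: "nat \<times> nat \<Rightarrow> bool"
  have fR: "finite R" by (simp add: R_def)
  have 0: "0 \<notin> R" by (simp add: R_def)
  have cR: "card R = n - 3" using V D by (simp add: R_def card_Diff_subset)
  have imp: "\<forall>ik\<in>K. C ik G" if "tfe n G v u \<and> tfe n G v w" for G
    using that tfe_imp[of G v u] tfe_imp[of G v w] tfe_edge[of G]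
    by (auto simp: K_def C_def R_def)
  have "E (\<lambda>G. of_bool (tfe n G v u \<and> tfe n G v w)) \<le> E (\<lambda>G. of_bool (\<forall>ik\<in>K. C ik G))"
    by (intro integral_mono intg) (use imp in auto)
  also have "\<dots> = (\<Prod>ik\<in>K. E (\<lambda>G. of_bool (C ik G)))"
  proof (rule real_groups[where J=J])
    show "finite K" using fR by (simp add: K_def)
    show "finite (pot_edges n)" by (rule finite_pot_edges)
    show "J k \<subseteq> pot_edges n" if "k \<in> K" for k
      using that V D by (auto simp: K_def R_def J_def intro!: ed_in)
    show "disjoint_family_on J K"
      using V D 0 by (auto simp: disjoint_family_on_def K_def R_def J_def ed_eq_iff)
    show "C k g = C k h" if "k \<in> K" "\<forall>x\<in>J k. g x = h x" for k and g h :: "nat \<times> nat \<Rightarrow> bool"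
      using that by (auto simp: C_def J_def split: prod.splits)
  qed
  also have "\<dots> = p * p * (\<Prod>k\<in>R. 1 - 2*p^2 + p^3)"
    unfolding K_def prod_K1[OF fR]
  proof (intro arg_cong2[where f="(*)"] prod.cong refl)
    show "E (\<lambda>G. of_bool (C (0, 0) G)) = p" using V D by (simp add: C_def E1 ed_in)
    show "E (\<lambda>G. of_bool (C (0, 1) G)) = p" using V D by (simp add: C_def E1 ed_in)
    show "E (\<lambda>G. of_bool (C (1, k) G)) = 1 - 2*p^2 + p^3" if "k \<in> R" for k
    proof -
      have "(\<lambda>G. of_bool (C (1,k) G)::real) = (\<lambda>G. of_bool (\<not> (G (ed v k) \<and> G (ed u k)) \<and> \<not> (G (ed v k) \<and> G (ed w k))))" by (simp add: C_def)
      moreover have "E (\<lambda>G. of_bool (\<not> (G (ed v k) \<and> G (ed u k)) \<and> \<not> (G (ed v k) \<and> G (ed w k)))) = 1 - 2*p^2 + p^3"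
        using that V D by (intro E3) (auto simp: R_def ed_eq_iff intro!: ed_in)
      ultimately show ?thesis by simp
    qed
  qed
  also have "\<dots> = p^2 * (1 - 2*p^2 + p^3) ^ (n - 3)"
    using cR by (simp add: power2_eq_square)
  finally show ?thesis .
qed


lemma tfe_sym: "tfe m G a b = tfe m G b a"
  unfolding tfe_def by (auto simp: ed_def min_def max_def)

lemma tfe_ed: "ed a b = ed a' b' \<Longrightarrow> tfe m G a b = tfe m G a' b'"
  using tfe_sym by (auto simp: ed_eq_iff)

definition Y :: "nat \<times> nat \<Rightarrow> (nat \<times> nat \<Rightarrow> bool) \<Rightarrow> real" where
  "Y e G = of_bool (tfe n G (fst e) (snd e))"

definition X :: "(nat \<times> nat \<Rightarrow> bool) \<Rightarrow> real" where
  "X G = (\<Sum>e\<in>pot_edges n. Y e G)"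

lemma pe: "e \<in> pot_edges n \<Longrightarrow> fst e \<in> {1..n} \<and> snd e \<in> {1..n} \<and> fst e < snd e \<and> ed (fst e) (snd e) = e"
  by (auto simp: pot_edges_def ed_def)

lemma X_zero: "triangle_free_edges n G = 0 \<longleftrightarrow> X G = 0"
proof -
  have "{e \<in> pot_edges n. G e \<and> \<not> (\<exists>k\<in>{1..n}. adj G (fst e) k \<and> adj G (snd e) k)}
      = pot_edges n \<inter> {e. tfe n G (fst e) (snd e)}"
    using pe by (auto simp: tfe_def)
  then have "X G = real (triangle_free_edges n G)"
    by (simp add: X_def Y_def triangle_free_edges_def finite_pot_edges)
  then show ?thesis by simp
qed

lemma EY: "e \<in> pot_edges n \<Longrightarrow> E (Y e) = p * (1 - p^2) ^ (n - 2)"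
  unfolding Y_def using pe[of e] by (intro L1) auto

lemma EX: "E X = real (card (pot_edges n)) * (p * (1 - p^2) ^ (n - 2))"
proof -
  have "E X = (\<Sum>e\<in>pot_edges n. E (Y e))"
    unfolding X_def by (rule Bochner_Integration.integral_sum) (rule intg)
  also have "\<dots> = (\<Sum>e\<in>pot_edges n. p * (1 - p^2) ^ (n - 2))" by (intro sum.cong refl EY)
  finally show ?thesis by simp
qed

definition shr :: "nat \<times> nat \<Rightarrow> nat \<times> nat \<Rightarrow> bool" where
  "shr e f \<longleftrightarrow> e \<noteq> f \<and> (fst e = fst f \<or> fst e = snd f \<or> snd e = fst f \<or> snd e = snd f)"

lemma EYY:
  assumes e: "e \<in> pot_edges n" and f: "f \<in> pot_edges n"
  shows "E (\<lambda>G. Y e G * Y f G) \<le> (if e = f then p * (1 - p^2) ^ (n - 2) else 0)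
      + p^2 * (1 - p^2) ^ (2 * (n - 4)) + (if shr e f then p^2 * (1 - 2*p^2 + p^3) ^ (n - 3) else 0)"
proof -
  define A where "A = p^2 * (1 - p^2) ^ (2 * (n - 4))"
  define B where "B = p^2 * (1 - 2*p^2 + p^3) ^ (n - 3)"
  have A0: "A \<ge> 0" using p1' by (simp add: A_def)
  have "1 - 2*p^2 + p^3 = (1 - p) * (1 + p - p^2)" by (simp add: algebra_simps power2_eq_square power3_eq_cube)
  also have "\<dots> \<ge> 0"
  proof -
    have pp: "p^2 \<le> p" using mult_left_mono[OF p1' p0'] by (simp add: power2_eq_square)
    show ?thesis using p0' p1' pp by (intro mult_nonneg_nonneg) auto
  qed
  finally have B0: "B \<ge> 0" by (simp add: B_def)
  obtain a b where ab: "e = (a,b)" by fastforce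
  obtain c d where cd: "f = (c,d)" by fastforce
  have YY: "Y e G * Y f G = of_bool (tfe n G a b \<and> tfe n G c d)" for G
    by (simp add: Y_def ab cd)
  have V: "a \<in> {1..n}" "b \<in> {1..n}" "c \<in> {1..n}" "d \<in> {1..n}" "a < b" "c < d"
    using pe[OF e] pe[OF f] ab cd by auto
  show ?thesis
  proof (cases "e = f")
    case True
    have "(\<lambda>G. Y e G * Y f G) = Y e" using True by (simp add: Y_def fun_eq_iff)
    then have "E (\<lambda>G. Y e G * Y f G) = E (Y e)" by (simp only:)
    then show ?thesis using EY[OF e] True A0 B0 by (simp add: shr_def A_def B_def)
  next
    case ne: False
    show ?thesis
    proof (cases "shr e f")
      case False
      then have D: "a \<noteq> c" "a \<noteq> d" "b \<noteq> c" "b \<noteq> d" using ne by (auto simp: shr_def ab cd)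
      have "E (\<lambda>G. Y e G * Y f G) \<le> A" unfolding YY A_def
        using V D by (intro L2) auto
      then show ?thesis using ne False by (simp add: A_def)
    next
      case True
      have "\<exists>v u w. v \<in> {1..n} \<and> u \<in> {1..n} \<and> w \<in> {1..n} \<and> v \<noteq> u \<and> v \<noteq> w \<and> u \<noteq> w
          \<and> ed a b = ed v u \<and> ed c d = ed v w"
      proof -
        consider "a = c" | "a = d" | "b = c" | "b = d" using True by (auto simp: shr_def ab cd)
        then show ?thesis
        proof cases
          case 1 then show ?thesis using V ne ab cd by (intro exI[of _ a] exI[of _ b] exI[of _ d]) auto
        next
          case 2 then show ?thesis using V ne ab cd by (intro exI[of _ a] exI[of _ b] exI[of _ c]) (auto simp: ed_def)
        next
          case 3 then show ?thesis using V ne ab cd by (intro exI[of _ b] exI[of _ a] exI[of _ d]) (auto simp: ed_def)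
        next
          case 4 then show ?thesis using V ne ab cd by (intro exI[of _ b] exI[of _ a] exI[of _ c]) (auto simp: ed_def)
        qed
      qed
      then obtain v u w where W: "v \<in> {1..n}" "u \<in> {1..n}" "w \<in> {1..n}" "v \<noteq> u" "v \<noteq> w" "u \<noteq> w"
          "ed a b = ed v u" "ed c d = ed v w" by blast
      have "E (\<lambda>G. Y e G * Y f G) = E (\<lambda>G. of_bool (tfe n G v u \<and> tfe n G v w))"
        unfolding YY using tfe_ed[OF W(7)] tfe_ed[OF W(8)] by simp
      also have "\<dots> \<le> B" unfolding B_def using W by (intro L3) auto
      finally have h: "E (\<lambda>G. Y e G * Y f G) \<le> B" .
      show ?thesis using h A0 ne True unfolding A_def B_def by (simp add: add_increasing)
    qed
  qed
qed

lemma card_shr: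
  assumes e: "e \<in> pot_edges n"
  shows "card {f \<in> pot_edges n. shr e f} \<le> 4 * n"
proof -
  obtain a b where ab: "e = (a,b)" by fastforce
  have "{f \<in> pot_edges n. shr e f} \<subseteq> ({a,b} \<times> {1..n}) \<union> ({1..n} \<times> {a,b})"
    by (auto simp: shr_def ab pot_edges_def)
  then have "card {f \<in> pot_edges n. shr e f} \<le> card (({a,b} \<times> {1..n}) \<union> ({1..n} \<times> {a,b}))"
    by (intro card_mono) auto
  also have "\<dots> \<le> card ({a,b} \<times> {1..n}) + card ({1..n} \<times> {a,b})" by (rule card_Un_le)
  also have "\<dots> \<le> 2 * n + n * 2"
    by (intro add_mono) (auto simp: card_cartesian_product card_insert_le_m1 intro!: mult_right_mono mult_left_mono card_insert_le_m1)
  finally show ?thesis by simp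
qed


lemma EX2:
  fixes Ne :: real
  defines "Ne \<equiv> real (card (pot_edges n))"
  shows "E (\<lambda>G. (X G)^2) \<le> Ne * (p * (1 - p^2) ^ (n - 2)) + Ne^2 * (p^2 * (1 - p^2) ^ (2 * (n - 4)))
     + 4 * n * Ne * (p^2 * (1 - 2*p^2 + p^3) ^ (n - 3))"
proof -
  define q where "q = p * (1 - p^2) ^ (n - 2)"
  define A where "A = p^2 * (1 - p^2) ^ (2 * (n - 4))"
  define B where "B = p^2 * (1 - 2*p^2 + p^3) ^ (n - 3)"
  have B0: "B \<ge> 0"
  proof -
    have pp: "p^2 \<le> p" using mult_left_mono[OF p1' p0'] by (simp add: power2_eq_square)
    have "1 - 2*p^2 + p^3 = (1 - p) * (1 + p - p^2)" by (simp add: algebra_simps power2_eq_square power3_eq_cube)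
    also have "\<dots> \<ge> 0" using p0' p1' pp by (intro mult_nonneg_nonneg) auto
    finally show ?thesis by (simp add: B_def)
  qed
  let ?E = "pot_edges n"
  have "E (\<lambda>G. (X G)^2) = E (\<lambda>G. \<Sum>e\<in>?E. \<Sum>f\<in>?E. Y e G * Y f G)"
    by (simp add: X_def power2_eq_square sum_product)
  also have "\<dots> = (\<Sum>e\<in>?E. \<Sum>f\<in>?E. E (\<lambda>G. Y e G * Y f G))"
    by (simp add: Bochner_Integration.integral_sum intg)
  also have "\<dots> \<le> (\<Sum>e\<in>?E. \<Sum>f\<in>?E. (if e = f then q else 0) + A + B * of_bool (shr e f))"
  proof (intro sum_mono)
    fix e f assume e: "e \<in> ?E" and f: "f \<in> ?E"
    have "B * of_bool (shr e f) = (if shr e f then B else 0)" by simp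
    then show "E (\<lambda>G. Y e G * Y f G) \<le> (if e = f then q else 0) + A + B * of_bool (shr e f)"
      using EYY[OF e f] unfolding q_def A_def B_def by simp
  qed
  also have "\<dots> = (\<Sum>e\<in>?E. q + Ne * A + B * card {f \<in> ?E. shr e f})"
  proof (intro sum.cong refl)
    fix e assume e: "e \<in> ?E"
    have "(\<Sum>f\<in>?E. (if e = f then q else 0) + A + B * of_bool (shr e f))
       = (\<Sum>f\<in>?E. (if e = f then q else 0)) + (\<Sum>f\<in>?E. A) + B * (\<Sum>f\<in>?E. of_bool (shr e f))"
      by (simp add: sum.distrib sum_distrib_left)
    also have "\<dots> = q + Ne * A + B * card {f \<in> ?E. shr e f}"
      using e finite_pot_edges by (simp add: Ne_def Int_def conj_commute)
    finally show "(\<Sum>f\<in>?E. (if e = f then q else 0) + A + B * of_bool (shr e f)) = q + Ne * A + B * card {f \<in> ?E. shr e f}" .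
  qed
  also have "\<dots> \<le> (\<Sum>e\<in>?E. q + Ne * A + B * (4 * n))"
    using card_shr B0 by (intro sum_mono add_left_mono mult_left_mono) (auto simp flip: of_nat_mult)
  also have "\<dots> = Ne * q + Ne^2 * A + 4 * n * Ne * B"
    by (simp add: Ne_def power2_eq_square algebra_simps)
  finally show ?thesis by (simp add: q_def A_def B_def)
qed

lemma prob_bound:
  fixes Ne :: real
  defines "Ne \<equiv> real (card (pot_edges n))"
  defines "(\<mu>::real) \<equiv> Ne * (p * (1 - p^2) ^ (n - 2))"
  shows "measure_pmf.prob M {G. triangle_free_edges n G = 0} * \<mu>^2
     \<le> \<mu> + Ne^2 * (p^2 * (1 - p^2) ^ (2 * (n - 4))) + 4 * n * Ne * (p^2 * (1 - 2*p^2 + p^3) ^ (n - 3)) - \<mu>^2"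
proof -
  define S where "S = {G. triangle_free_edges n G = 0}"
  have "measure_pmf.prob M S * \<mu>^2 = E (\<lambda>G. indicator S G * \<mu>^2)"
    by simp
  also have "\<dots> \<le> E (\<lambda>G. (X G - \<mu>)^2)"
    by (intro integral_mono intg) (auto simp: S_def indicator_def X_zero)
  also have "E (\<lambda>G. (X G - \<mu>)^2) = E (\<lambda>G. (X G)^2) - 2 * \<mu> * E X + \<mu>^2"
  proof -
    have "E (\<lambda>G. (X G - \<mu>)^2) = E (\<lambda>G. (X G)^2 - (2 * \<mu>) * X G + \<mu>^2)"
      by (simp add: power2_eq_square algebra_simps)
    also have "\<dots> = E (\<lambda>G. (X G)^2) - E (\<lambda>G. (2 * \<mu>) * X G) + \<mu>^2"
      by (simp add: Bochner_Integration.integral_diff Bochner_Integration.integral_add intg)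
    finally show ?thesis by simp
  qed
  also have "E X = \<mu>" by (simp add: EX \<mu>_def Ne_def)
  finally have h: "measure_pmf.prob M S * \<mu>^2 \<le> E (\<lambda>G. (X G)^2) - 2 * \<mu> * \<mu> + \<mu>^2" .
  have e2: "E (\<lambda>G. (X G)^2) \<le> \<mu> + Ne^2 * (p^2 * (1 - p^2) ^ (2 * (n - 4))) + 4 * n * Ne * (p^2 * (1 - 2*p^2 + p^3) ^ (n - 3))"
    using EX2 unfolding \<mu>_def Ne_def .
  have "2 * \<mu> * \<mu> = 2 * \<mu>^2" by (simp add: power2_eq_square)
  then show ?thesis using h e2 unfolding S_def by linarith
qed

end



lemma card_pot_edges: "card (pot_edges n) = n choose 2"
proof (induction n)
  case 0
  have "pot_edges 0 = {}" by (auto simp: pot_edges_def)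
  then show ?case by simp
next
  case (Suc n)
  have eq: "pot_edges (Suc n) = pot_edges n \<union> (\<lambda>i. (i, Suc n)) ` {1..n}"
    by (auto simp: pot_edges_def)
  have "card (pot_edges (Suc n)) = card (pot_edges n) + card ((\<lambda>i. (i, Suc n)) ` {1..n})"
    unfolding eq by (intro card_Un_disjoint finite_pot_edges) (auto simp: pot_edges_def)
  also have "card ((\<lambda>i. (i, Suc n)) ` {1..n}) = n"
    by (subst card_image) (auto simp: inj_on_def)
  finally show ?case using Suc by (simp add: numeral_2_eq_2)
qed

lemma pp_le: fixes p :: real assumes "0 \<le> p" "p \<le> 1/10" shows "p^2 \<le> 1/100"
  using mult_mono[of p "1/10" p "1/10"] assms by (simp add: power2_eq_square)

lemma aux_s:
  fixes p :: real
  assumes "0 \<le> p" "p \<le> 1/10"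
  shows "1 - 2*p^2 + p^3 \<le> (1 - p^2)^2 * (1 + 2*p^3)"
proof -
  have pp: "p^2 \<le> 1/100" using pp_le[OF assms] .
  have t1: "99/100 \<le> 1 - p^2" using pp by simp
  have "(99/100)^2 \<le> (1 - p^2)^2" by (rule power_mono[OF t1]) simp
  then have t2: "(1 - p^2)^2 \<ge> 1/2" by (simp add: power2_eq_square)
  have "(1 - p^2)^2 * (1 + 2*p^3) - (1 - 2*p^2 + p^3) = p^3 * (2 * (1 - p^2)^2 - 1) + p^4"
    by (simp add: algebra_simps power2_eq_square power3_eq_cube power4_eq_xxxx)
  also have "\<dots> \<ge> 0" using t2 assms by (intro add_nonneg_nonneg mult_nonneg_nonneg) auto
  finally show ?thesis by simp
qed

lemma aux_y:
  fixes p :: real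
  assumes "0 \<le> p" "p \<le> 1/10"
  shows "(1 + 2*p^3)^4 * (1 - p^2) \<le> 1"
proof -
  define y where "y = 2*p^3"
  have p3: "p^3 \<le> p^2 / 10"
  proof -
    have "p^3 = p * p^2" by (simp add: power3_eq_cube power2_eq_square)
    also have "\<dots> \<le> (1/10) * p^2" using assms by (intro mult_right_mono) auto
    finally show ?thesis by simp
  qed
  have y0: "0 \<le> y" using assms by (simp add: y_def)
  have y1: "y \<le> 1/100"
  proof -
    have "p^2 \<le> 1/100" using pp_le[OF assms] .
    then show ?thesis using p3 by (simp add: y_def)
  qed
  have "(1 + y)^4 = 1 + 4*y + y * (6*y + 4*y^2 + y^3)"
    by (simp add: algebra_simps power2_eq_square power3_eq_cube power4_eq_xxxx)
  also have "\<dots> \<le> 1 + 4*y + y * 1"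
  proof -
    have yy: "y^2 \<le> y" using y0 y1 mult_left_le[of y y] by (simp add: power2_eq_square)
    have "y^3 \<le> y" using y0 y1 mult_left_le[of "y^2" y] yy by (simp add: power3_eq_cube power2_eq_square)
    note yy this
    then have "6*y + 4*y^2 + y^3 \<le> 1" using y1 by linarith
    then show ?thesis using y0 by (intro add_left_mono mult_left_mono) auto
  qed
  finally have h: "(1 + y)^4 \<le> 1 + 5*y" by simp
  have "(1 + y)^4 * (1 - p^2) \<le> (1 + 5*y) * (1 - p^2)"
    using h assms by (intro mult_right_mono) (auto simp: power2_eq_square intro!: mult_le_one)
  also have "\<dots> = 1 - p^2 + 10 * p^3 - 10 * p^3 * p^2" by (simp add: y_def algebra_simps)
  also have "\<dots> \<le> 1"
  proof -
    have "0 \<le> p^3 * p^2" using assms by simp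
    then show ?thesis using p3 by linarith
  qed
  finally show ?thesis by (simp add: y_def)
qed


lemma choose2_real: "2 * real (n choose 2) = real n * (real n - 1)"
  by (induction n) (auto simp: numeral_2_eq_2 algebra_simps)

lemma y_bound:
  fixes p Ne :: real and n :: nat
  assumes n: "n \<ge> 4" and p: "0 \<le> p" "p \<le> 1/10" and Ne: "Ne \<le> real n ^ 2"
    and mu: "Ne * (p * (1 - p^2) ^ (n - 2)) \<ge> 1"
  shows "(1 + 2*p^3) ^ (n - 3) \<le> sqrt n"
proof -
  define t where "t = 1 - p^2"
  define y where "y = (1 + 2*p^3) ^ (n - 3)"
  have pp: "p^2 \<le> 1/100" using pp_le p by blast
  have t0: "0 < t" "t \<le> 1" using pp by (auto simp: t_def)
  have y0: "0 \<le> y" using p by (simp add: y_def)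
  have h4: "(1 + 2*p^3)^4 \<le> 1 / t" using aux_y[OF p] t0 by (simp add: t_def field_simps)
  have "y^4 = ((1 + 2*p^3)^4) ^ (n - 3)" by (simp add: y_def flip: power_mult) (simp add: mult.commute)
  also have "\<dots> \<le> (1/t) ^ (n - 3)" by (rule power_mono[OF h4]) simp
  also have "\<dots> \<le> (1/t) ^ (n - 2)" using t0 n by (intro power_increasing) (auto simp: field_simps)
  also have "\<dots> = 1 / t ^ (n - 2)" by (simp add: power_divide)
  also have "\<dots> \<le> Ne * p"
  proof -
    have "1 \<le> (Ne * p) * t ^ (n - 2)" using mu by (simp add: t_def mult_ac)
    then show ?thesis using t0 by (simp add: field_simps)
  qed
  also have "\<dots> \<le> Ne"
  proof -
    have "Ne \<ge> 0"
    proof (rule ccontr)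
      assume "\<not> Ne \<ge> 0"
      then have "Ne * (p * (1 - p^2) ^ (n - 2)) \<le> 0" using t0 p
        by (intro mult_nonpos_nonneg) (auto simp: t_def)
      then show False using mu by simp
    qed
    then show ?thesis using p mult_left_le[of p Ne] by simp
  qed
  also have "\<dots> \<le> real n ^ 2" by (rule Ne)
  finally have "(y^2)^2 \<le> (real n)^2" by (simp flip: power_mult)
  then have "y^2 \<le> real n" by (rule power2_le_imp_le) simp
  then show ?thesis unfolding y_def[symmetric] by (rule real_le_rsqrt)
qed


lemma per_n:
  fixes n :: nat and p :: real
  defines "\<mu> \<equiv> real (n choose 2) * p * (1 - p^2) ^ (n - 2)"
  assumes n: "n \<ge> 4" and p: "0 \<le> p" "p \<le> 1/10" and mu: "\<mu> \<ge> 1"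
  shows "measure_pmf.prob (G_np n p) {G. triangle_free_edges n G = 0}
     \<le> 1 / \<mu> + (1 / (1 - p^2)^4 - 1) + 32 * sqrt n / n"
proof -
  define Ne where "Ne = real (n choose 2)"
  define t where "t = 1 - p^2"
  define s where "s = 1 - 2*p^2 + p^3"
  define P where "P = measure_pmf.prob (G_np n p) {G. triangle_free_edges n G = 0}"
  define A where "A = p^2 * t ^ (2 * (n - 4))"
  define B where "B = p^2 * s ^ (n - 3)"
  have pp: "p^2 \<le> 1/100" using pp_le p by blast
  have t0: "0 < t" "t \<le> 1" using pp by (auto simp: t_def)
  have t2: "t^2 \<ge> 1/2"
  proof -
    have t1: "99/100 \<le> t" using pp by (simp add: t_def)
    have "(99/100)^2 \<le> t^2" by (rule power_mono[OF t1]) simp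
    then show ?thesis by (simp add: power2_eq_square)
  qed
  have mu_eq: "\<mu> = Ne * p * t ^ (n - 2)" by (simp add: \<mu>_def Ne_def t_def)
  have mu0: "\<mu> > 0" using mu by simp
  have ppos: "p > 0" using mu0 mu_eq t0 p(1) by (cases "p = 0") auto
  have Ne2: "2 * Ne = real n * (real n - 1)" by (simp add: Ne_def choose2_real)
  have Ne_lo: "Ne \<ge> real n ^ 2 / 4"
  proof -
    have "real n \<ge> 4" using n by simp
    then have "real n * 2 \<le> real n * real n" using mult_left_mono[of 2 "real n" "real n"] by simp
    then have "real n * (real n - 1) \<ge> real n ^ 2 / 2" by (simp add: power2_eq_square algebra_simps)
    then show ?thesis using Ne2 by simp
  qed
  have Ne_hi: "Ne \<le> real n ^ 2"
  proof -
    have a: "0 \<le> real n * real n" by simp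
    have b: "2 * Ne = real n * real n - real n" using Ne2 by (simp add: algebra_simps)
    show ?thesis unfolding power2_eq_square using a b by linarith
  qed
  have Ne0: "Ne > 0"
  proof -
    have "real n ^ 2 / 4 > 0" using n by simp
    then show ?thesis using Ne_lo by linarith
  qed
  interpret gr n p using p by unfold_locales auto
  have main: "P * \<mu>^2 \<le> \<mu> + Ne^2 * A + 4 * n * Ne * B - \<mu>^2"
    using prob_bound unfolding P_def G_np_def mu_eq Ne_def A_def B_def t_def s_def card_pot_edges
    by (simp add: mult_ac)
  have "P \<le> (\<mu> + Ne^2 * A + 4 * n * Ne * B - \<mu>^2) / \<mu>^2"
    using main mu0 by (subst pos_le_divide_eq) auto
  also have "\<dots> = 1 / \<mu> + Ne^2 * A / \<mu>^2 - 1 + 4 * n * Ne * B / \<mu>^2"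
    using mu0 by (simp add: add_divide_distrib diff_divide_distrib power2_eq_square)
  also have "Ne^2 * A / \<mu>^2 = 1 / t^4"
  proof -
    have "\<mu>^2 = Ne^2 * A * t^4"
    proof -
      have ex: "2 * (n - 2) = 2 * (n - 4) + 4" using n by simp
      have tt: "(t ^ (n - 2))^2 = t ^ (2 * (n - 2))" by (simp add: power_mult[symmetric] mult.commute)
      have "\<mu>^2 = Ne^2 * p^2 * (t ^ (n - 2))^2"
        by (simp add: mu_eq power_mult_distrib)
      also note tt
      also have "t ^ (2 * (n - 2)) = t ^ (2 * (n - 4)) * t^4" unfolding ex by (rule power_add)
      finally show ?thesis by (simp add: A_def mult_ac)
    qed
    then show ?thesis using Ne0 ppos t0 by (simp add: A_def field_simps)
  qed
  also have "4 * n * Ne * B / \<mu>^2 \<le> 32 * sqrt n / n"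
  proof -
    define y where "y = (1 + 2*p^3) ^ (n - 3)"
    have yb: "y \<le> sqrt n" unfolding y_def
      using y_bound[OF n p Ne_hi] mu unfolding mu_eq by (simp add: t_def mult_ac)
    have y0: "0 \<le> y" using p by (simp add: y_def)
    have "s ^ (n - 3) \<le> (t^2 * (1 + 2*p^3)) ^ (n - 3)"
    proof (rule power_mono)
      show "s \<le> t^2 * (1 + 2*p^3)" using aux_s[OF p] by (simp add: s_def t_def)
      have "1 - 2*p^2 + p^3 = (1 - p) * (1 + p - p^2)" by (simp add: algebra_simps power2_eq_square power3_eq_cube)
      also have "\<dots> \<ge> 0" using p pp by (intro mult_nonneg_nonneg) auto
      finally show "0 \<le> s" by (simp add: s_def)
    qed
    also have "\<dots> = t ^ (2 * (n - 3)) * y" by (simp add: y_def power_mult_distrib power_mult)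
    finally have sb: "s ^ (n - 3) \<le> t ^ (2 * (n - 3)) * y" .
    have mu2: "\<mu>^2 = Ne^2 * p^2 * t ^ (2 * (n - 3)) * t^2"
    proof -
      have ex: "2 * (n - 2) = 2 * (n - 3) + 2" using n by simp
      have tt: "(t ^ (n - 2))^2 = t ^ (2 * (n - 2))" by (simp add: power_mult[symmetric] mult.commute)
      have "\<mu>^2 = Ne^2 * p^2 * (t ^ (n - 2))^2"
        by (simp add: mu_eq power_mult_distrib)
      also note tt
      also have "t ^ (2 * (n - 2)) = t ^ (2 * (n - 3)) * t^2" unfolding ex by (rule power_add)
      finally show ?thesis by (simp add: mult_ac)
    qed
    have "4 * n * Ne * B / \<mu>^2 = 4 * n * s ^ (n - 3) / (Ne * t ^ (2 * (n - 3)) * t^2)"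
      unfolding mu2 B_def using Ne0 ppos t0 by (simp add: field_simps power2_eq_square)
    also have "\<dots> \<le> 4 * n * (t ^ (2 * (n - 3)) * y) / (Ne * t ^ (2 * (n - 3)) * t^2)"
      using sb Ne0 t0 by (intro divide_right_mono mult_left_mono) auto
    also have "\<dots> = 4 * n * y / (Ne * t^2)" using t0 by simp
    also have "\<dots> \<le> 4 * n * sqrt n / ((real n ^ 2 / 4) * (1/2))"
      using yb y0 Ne_lo t2 n Ne0 t0
      by (intro frac_le mult_left_mono mult_mono) auto
    also have "\<dots> = 32 * sqrt n / n" using n by (simp add: field_simps power2_eq_square)
    finally show ?thesis .
  qed
  finally show ?thesis unfolding P_def t_def by simp
qed


lemma x_bound:
  fixes n :: nat and p :: real
  assumes n: "n \<ge> 4" and p: "0 \<le> p" "p \<le> 1"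
    and mu: "real (n choose 2) * p * (1 - p^2) ^ (n - 2) \<ge> 1"
  shows "p^2 \<le> 2 * ln (real n) / (real n - 2)"
proof -
  define x where "x = p^2"
  have x0: "0 \<le> x" "x \<le> 1" using p by (auto simp: x_def power_le_one)
  have Ne_hi: "real (n choose 2) \<le> real n ^ 2"
  proof -
    have a: "0 \<le> real n * real n" by simp
    have b: "2 * real (n choose 2) = real n * real n - real n" using choose2_real[of n] by (simp add: algebra_simps)
    show ?thesis unfolding power2_eq_square using a b by linarith
  qed
  have "(1 - x) ^ (n - 2) \<le> exp (- x) ^ (n - 2)"
    using x0 exp_ge_add_one_self[of "-x"] by (intro power_mono) auto
  also have "\<dots> = exp (real (n - 2) * (- x))" by (rule exp_of_nat_mult[symmetric])
  finally have h1: "(1 - x) ^ (n - 2) \<le> exp (real (n - 2) * (- x))" .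
  have "1 \<le> real (n choose 2) * p * (1 - x) ^ (n - 2)" using mu by (simp add: x_def)
  also have "\<dots> \<le> real n ^ 2 * 1 * exp (real (n - 2) * (- x))"
    using Ne_hi p h1 x0 by (intro mult_mono) auto
  finally have h2: "1 \<le> real n ^ 2 * exp (real (n - 2) * (- x))" by simp
  have npos: "real n > 0" using n by simp
  have "0 = ln 1" by simp
  also have "\<dots> \<le> ln (real n ^ 2 * exp (real (n - 2) * (- x)))"
    using h2 by (subst ln_le_cancel_iff) auto
  also have "\<dots> = 2 * ln (real n) - real (n - 2) * x"
    using npos by (simp add: ln_mult ln_realpow)
  finally have "real (n - 2) * x \<le> 2 * ln (real n)" by simp
  moreover have "real (n - 2) = real n - 2" using n by simp
  moreover have "real n - 2 > 0" using n by simp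
  ultimately show ?thesis by (simp add: x_def field_simps)
qed

lemma part1:
  fixes p :: "nat \<Rightarrow> real"
  assumes prob: "\<forall>n. 0 \<le> p n \<and> p n \<le> 1"
    and lim: "filterlim (\<lambda>n. real (n choose 2) * p n * (1 - (p n)\<^sup>2) ^ (n - 2)) at_top sequentially"
  shows "(\<lambda>n. measure_pmf.prob (G_np n (p n)) {G. triangle_free_edges n G = 0}) \<longlonglongrightarrow> 0"
proof -
  define \<mu> where "\<mu> n = real (n choose 2) * p n * (1 - (p n)\<^sup>2) ^ (n - 2)" for n
  have ev1: "eventually (\<lambda>n. \<mu> n \<ge> 1) sequentially"
    using lim unfolding \<mu>_def filterlim_at_top by blast
  have ev4: "eventually (\<lambda>n. n \<ge> 4) sequentially" by (rule eventually_ge_at_top)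
  have xb: "eventually (\<lambda>n. (p n)^2 \<le> 2 * ln (real n) / (real n - 2)) sequentially"
    using ev1 ev4 by eventually_elim (use prob x_bound \<mu>_def in auto)
  have lim0: "(\<lambda>n. 2 * ln (real n) / (real n - 2)) \<longlonglongrightarrow> 0" by real_asymp
  have x0: "(\<lambda>n. (p n)^2) \<longlonglongrightarrow> 0"
    by (rule tendsto_sandwich[OF _ xb tendsto_const lim0]) auto
  have evp: "eventually (\<lambda>n. p n \<le> 1/10) sequentially"
  proof -
    have "eventually (\<lambda>n. (p n)^2 < 1/100) sequentially"
      using order_tendstoD(2)[OF x0, of "1/100"] by simp
    then show ?thesis
    proof eventually_elim
      case (elim n)
      show ?case
      proof (rule ccontr)
        assume "\<not> p n \<le> 1/10"
        then have "1/10 \<le> p n" by simp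
        then have "(1/10)^2 \<le> (p n)^2" by (rule power_mono) simp
        then show False using elim by (simp add: power2_eq_square)
      qed
    qed
  qed
  have bound: "eventually (\<lambda>n. measure_pmf.prob (G_np n (p n)) {G. triangle_free_edges n G = 0}
      \<le> 1 / \<mu> n + (1 / (1 - (p n)^2)^4 - 1) + 32 * sqrt (real n) / real n) sequentially"
    using ev1 ev4 evp by eventually_elim (use prob per_n \<mu>_def in auto)
  have r1: "(\<lambda>n. 1 / \<mu> n) \<longlonglongrightarrow> 0"
    using tendsto_inverse_0_at_top[OF lim[folded \<mu>_def]] by (simp add: inverse_eq_divide)
  have r2: "(\<lambda>n. 1 / (1 - (p n)^2)^4 - 1) \<longlonglongrightarrow> 1 / (1 - 0)^4 - 1"
    by (intro tendsto_intros x0) simp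
  have r3: "(\<lambda>n. 32 * sqrt (real n) / real n) \<longlonglongrightarrow> 0" by real_asymp
  have rhs: "(\<lambda>n. 1 / \<mu> n + (1 / (1 - (p n)^2)^4 - 1) + 32 * sqrt (real n) / real n) \<longlonglongrightarrow> 0"
    using tendsto_add[OF tendsto_add[OF r1 r2] r3] by simp
  show ?thesis
    by (rule tendsto_sandwich[OF _ bound tendsto_const rhs]) auto
qed


lemma Ne_lo: "n \<ge> 4 \<Longrightarrow> real (n choose 2) \<ge> real n ^ 2 / 4"
proof -
  assume n: "n \<ge> 4"
  have "real n \<ge> 4" using n by simp
  then have "real n * 2 \<le> real n * real n" using mult_left_mono[of 2 "real n" "real n"] by simp
  then have "real n * (real n - 1) \<ge> real n ^ 2 / 2" by (simp add: power2_eq_square algebra_simps)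
  then show ?thesis using choose2_real[of n] by simp
qed

lemma mu_lower:
  fixes n :: nat and p c :: real
  assumes n: "n \<ge> 4" and c: "c > 0" and p: "0 \<le> p" "p \<le> 1"
    and pl: "1 / sqrt (real n) \<le> p" and pu: "p < sqrt (c * ln (real n) / real n)"
    and s1: "c * ln (real n) / real n \<le> 1/2" and s2: "2 * c^2 * (ln (real n))^2 / real n \<le> 1"
  shows "real (n choose 2) * p * (1 - p^2) ^ (n - 2) \<ge> exp ((3/2 - c) * ln (real n) - 1) / 4"
proof -
  define x where "x = p^2"
  define L where "L = ln (real n)"
  have npos: "real n > 0" using n by simp
  have L0: "L \<ge> 0" using n by (simp add: L_def)
  have arg0: "0 \<le> c * L / real n" using c L0 npos by simp
  have x0: "0 \<le> x" by (simp add: x_def)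
  have xb: "x \<le> c * L / real n"
  proof -
    have "p^2 \<le> (sqrt (c * L / real n))^2" using p pu by (intro power_mono) (auto simp: L_def)
    then show ?thesis using arg0 by (simp add: x_def)
  qed
  have xh: "x \<le> 1/2" using xb s1 unfolding L_def by linarith
  have nx: "real n * x \<le> c * L" using xb npos by (simp add: field_simps)
  have nx2: "real n * (2 * x^2) \<le> 1"
  proof -
    have "x^2 \<le> (c * L / real n)^2" using x0 xb by (intro power_mono) auto
    then have "real n * (2 * x^2) \<le> real n * (2 * (c * L / real n)^2)" using npos by simp
    also have "\<dots> = 2 * c^2 * L^2 / real n" using npos by (simp add: power2_eq_square field_simps)
    also have "\<dots> \<le> 1" using s2 by (simp add: L_def)
    finally show ?thesis .
  qed
  have "real n * (- x - 2 * x^2) \<le> real n * ln (1 - x)"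
    using ln_one_minus_pos_lower_bound[OF x0 xh] npos by (intro mult_left_mono) auto
  moreover have "real n * (- x - 2 * x^2) \<ge> - c * L - 1" using nx nx2 by (simp add: algebra_simps)
  ultimately have h: "- c * L - 1 \<le> real n * ln (1 - x)" by linarith
  have "exp (- c * L - 1) \<le> exp (real n * ln (1 - x))" using h by simp
  also have "\<dots> = (1 - x) ^ n" using xh by (simp add: exp_of_nat_mult)
  also have "\<dots> \<le> (1 - x) ^ (n - 2)" using x0 xh by (intro power_decreasing) auto
  finally have e1: "exp (- c * L - 1) \<le> (1 - x) ^ (n - 2)" .
  have "exp ((3/2 - c) * L - 1) / 4 = (real n ^ 2 / 4) * (1 / sqrt (real n)) * exp (- c * L - 1)"
  proof -
    have a0: "exp (real 2 * L) = exp L ^ 2" by (rule exp_of_nat_mult)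
    have a: "real n ^ 2 = exp (2 * L)" using npos a0 by (simp add: L_def)
    have b: "1 / sqrt (real n) = exp (- L / 2)"
      using npos by (simp add: L_def exp_minus ln_sqrt[symmetric] inverse_eq_divide)
    have "(real n ^ 2 / 4) * (1 / sqrt (real n)) * exp (- c * L - 1) = exp (2 * L) * exp (- L / 2) * exp (- c * L - 1) / 4"
      by (simp add: a b)
    also have "\<dots> = exp (2 * L + (- L / 2) + (- c * L - 1)) / 4" by (simp only: exp_add)
    also have "2 * L + (- L / 2) + (- c * L - 1) = (3/2 - c) * L - 1" by (simp add: algebra_simps)
    finally show ?thesis by simp
  qed
  also have "\<dots> \<le> real (n choose 2) * p * (1 - x) ^ (n - 2)"
    using Ne_lo[OF n] pl e1 p by (intro mult_mono) auto
  finally show ?thesis by (simp add: x_def L_def)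
qed


lemma part2:
  fixes p :: "nat \<Rightarrow> real"
  assumes prob: "\<forall>n. 0 \<le> p n \<and> p n \<le> 1"
    and lower: "\<forall>\<^sub>F n in sequentially. 1 / sqrt (real n) \<le> p n"
    and eps: "\<epsilon> > 0"
    and up: "\<forall>\<^sub>F n in sequentially. p n < sqrt ((3/2 - \<epsilon>) * ln (real n) / real n)"
  shows "filterlim (\<lambda>n. real (n choose 2) * p n * (1 - (p n)\<^sup>2) ^ (n - 2)) at_top sequentially"
proof (cases "\<epsilon> < 3/2")
  case False
  have "eventually (\<lambda>n. False) sequentially"
    using up eventually_ge_at_top[of 1]
  proof eventually_elim
    case (elim n)
    have "(3/2 - \<epsilon>) * ln (real n) \<le> 0" using False elim(2)
      by (intro mult_nonpos_nonneg) auto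
    then have "(3/2 - \<epsilon>) * ln (real n) / real n \<le> 0" by (simp add: divide_nonpos_nonneg)
    then have "sqrt ((3/2 - \<epsilon>) * ln (real n) / real n) \<le> 0" by simp
    then show False using elim(1) prob by (meson le_less_trans not_less)
  qed
  then show ?thesis by simp
next
  case True
  define c where "c = 3/2 - \<epsilon>"
  have c0: "c > 0" using True by (simp add: c_def)
  have l1: "(\<lambda>n. ln (real n) / real n) \<longlonglongrightarrow> 0" by real_asymp
  have l2: "(\<lambda>n. (ln (real n))^2 / real n) \<longlonglongrightarrow> 0" by real_asymp
  have s1: "eventually (\<lambda>n. c * ln (real n) / real n \<le> 1/2) sequentially"
  proof -
    have "(\<lambda>n. c * (ln (real n) / real n)) \<longlonglongrightarrow> c * 0" by (intro tendsto_intros l1)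
    from order_tendstoD(2)[OF this, of "1/2"] show ?thesis
      by (auto elim!: eventually_mono)
  qed
  have s2: "eventually (\<lambda>n. 2 * c^2 * (ln (real n))^2 / real n \<le> 1) sequentially"
  proof -
    have "(\<lambda>n. (2 * c^2) * ((ln (real n))^2 / real n)) \<longlonglongrightarrow> (2 * c^2) * 0" by (intro tendsto_intros l2)
    from order_tendstoD(2)[OF this, of 1] show ?thesis
      by (auto elim!: eventually_mono)
  qed
  have ev: "eventually (\<lambda>n. exp (\<epsilon> * ln (real n) - 1) / 4 \<le> real (n choose 2) * p n * (1 - (p n)\<^sup>2) ^ (n - 2)) sequentially"
    using eventually_ge_at_top[of 4] lower up s1 s2
  proof eventually_elim
    case (elim n)
    have "exp ((3/2 - c) * ln (real n) - 1) / 4 \<le> real (n choose 2) * p n * (1 - (p n)\<^sup>2) ^ (n - 2)"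
      using elim prob by (intro mu_lower c0) (auto simp: c_def)
    then show ?case by (simp add: c_def)
  qed
  have h1: "filterlim (\<lambda>n. ln (real n)) at_top sequentially"
    by (rule filterlim_compose[OF ln_at_top filterlim_real_sequentially])
  have h2: "filterlim (\<lambda>n. \<epsilon> * ln (real n)) at_top sequentially"
    by (rule filterlim_tendsto_pos_mult_at_top[OF tendsto_const eps h1])
  have h3: "filterlim (\<lambda>n. - 1 + \<epsilon> * ln (real n)) at_top sequentially"
    by (rule filterlim_tendsto_add_at_top[OF tendsto_const h2])
  have h4: "filterlim (\<lambda>n. exp (- 1 + \<epsilon> * ln (real n))) at_top sequentially"
    by (rule filterlim_compose[OF exp_at_top h3])
  have h5: "filterlim (\<lambda>n. (1/4) * exp (- 1 + \<epsilon> * ln (real n))) at_top sequentially"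
    by (rule filterlim_tendsto_pos_mult_at_top[OF tendsto_const _ h4]) simp
  have h6: "filterlim (\<lambda>n. exp (\<epsilon> * ln (real n) - 1) / 4) at_top sequentially"
    using h5 by (simp add: algebra_simps)
  show ?thesis by (rule filterlim_at_top_mono[OF h6 ev])
qed

theorem proposition2p7:
  fixes p :: "nat \<Rightarrow> real"
  assumes prob: "\<forall>n. 0 \<le> p n \<and> p n \<le> 1"
    and lower: "\<forall>\<^sub>F n in sequentially. 1 / sqrt (real n) \<le> p n"
  shows "(filterlim (\<lambda>n. real (n choose 2) * p n * (1 - (p n)\<^sup>2) ^ (n - 2)) at_top sequentially
            \<longrightarrow> (\<lambda>n. measure_pmf.prob (G_np n (p n)) {G. triangle_free_edges n G = 0})
                  \<longlonglongrightarrow> 0)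
       \<and> ((\<exists>\<epsilon>>0. \<forall>\<^sub>F n in sequentially. p n < sqrt ((3/2 - \<epsilon>) * ln (real n) / real n))
            \<longrightarrow> (\<lambda>n. measure_pmf.prob (G_np n (p n)) {G. triangle_free_edges n G = 0})
                  \<longlonglongrightarrow> 0)"
  using part1[OF prob] part2[OF prob lower] by blast

end
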